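(* Let $R$ be a nontrivial ring (with unity) and $\Sigma$ an alphabet. Then for every $L\in\mathrm{RevL}(\mathbb{F}_2,\Sigma)$, the characteristic series $\underline{L}$ of $L$ over $R$ belongs to $\mathrm{Rev}(R,\Sigma)$, and $L\in\mathrm{RevL}(R,\Sigma)$.
   Context: A ring is a semiring $(R,+,\cdot,0,1)$ whose additive monoid is an abelian group (not necessarily commutative multiplication); nontrivial means $0\neq1$. $\mathbb{F}_2$ is the two-element field. For a semiring $S$ and finite nonempty alphabet $\Sigma$, a series is a map $r\colon\Sigma^*\to S$ with value $(r,w)$ and support $\mathrm{supp}(r)=\{w\mid(r,w)\neq0\}$; the characteristic series $\underline{L}$ of $L\subseteq\Sigma^*$ over $S$ has coefficient $1$ on $L$ and $0$ elsewhere. A weighted automaton over $S$ and $\Sigma$ is $\mathcal{A}=(Q,\sigma,\iota,\tau)$ with $Q$ finite, $\sigma\colon Q\times\Sigma\times Q\to S$, $\iota,\tau\colon Q\to S$; a run on $w=a_1\cdots a_t$ is $q_0a_1q_1\cdots a_tq_t$ with all $\sigma(q_{k-1},a_k,q_k)\neq0$, of weight $\iota(q_0)\sigma(q_0,a_1,q_1)\cdots\sigma(q_{t-1},a_t,q_t)\tau(q_t)$, and $(\|\mathcal{A}\|,w)$ is the sum of weights of all runs on $w$. $\mathcal{A}$ is reversible if for all $p,p',q,q'\in Q$, $a\in\Sigma$: $\sigma(p,a,q)\neq0\neq\sigma(p,a,q')$ implies $q=q'$, and $\sigma(p,a,q)\neq0\neq\sigma(p',a,q)$ implies $p=p'$.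 $\mathrm{Rev}(S,\Sigma)$ is the set of series realised by reversible weighted automata over $S$ and $\Sigma$, and $\mathrm{RevL}(S,\Sigma)=\{\mathrm{supp}(r)\mid r\in\mathrm{Rev}(S,\Sigma)\}$. *)

theory Defs
  imports Main "HOL-Library.Z2"
begin

text \<open>Weighted automata over a semiring 'w (class semiring_1, multiplication not
  necessarily commutative) and an alphabet given by a finite type 'a (types are nonempty).\<close>

type_synonym ('a, 'w) series = "'a list \<Rightarrow> 'w"

definition supp :: "('a, 'w::zero) series \<Rightarrow> 'a list set" where
  "supp r = {w. r w \<noteq> 0}"

definition char_series :: "'a list set \<Rightarrow> ('a, 'w::{zero,one}) series" where
  "char_series L = (\<lambda>w. if w \<in> L then 1 else 0)"

definition is_run :: "nat set \<Rightarrow> (nat \<Rightarrow> 'a \<Rightarrow> nat \<Rightarrow> 'w::zero) \<Rightarrow> 'a list \<Rightarrow> nat list \<Rightarrow> bool" where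
  "is_run Q \<sigma> w qs \<longleftrightarrow> length qs = Suc (length w) \<and> set qs \<subseteq> Q \<and>
     (\<forall>k < length w. \<sigma> (qs ! k) (w ! k) (qs ! Suc k) \<noteq> 0)"

definition run_weight :: "(nat \<Rightarrow> 'a \<Rightarrow> nat \<Rightarrow> 'w::semiring_1) \<Rightarrow> (nat \<Rightarrow> 'w) \<Rightarrow> (nat \<Rightarrow> 'w)
    \<Rightarrow> 'a list \<Rightarrow> nat list \<Rightarrow> 'w" where
  "run_weight \<sigma> \<iota> \<tau> w qs =
     \<iota> (qs ! 0) * prod_list (map (\<lambda>k. \<sigma> (qs ! k) (w ! k) (qs ! Suc k)) [0..<length w])
       * \<tau> (qs ! length w)"

definition behaviour :: "nat set \<Rightarrow> (nat \<Rightarrow> 'a \<Rightarrow> nat \<Rightarrow> 'w::semiring_1) \<Rightarrow> (nat \<Rightarrow> 'w)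
    \<Rightarrow> (nat \<Rightarrow> 'w) \<Rightarrow> ('a, 'w) series" where
  "behaviour Q \<sigma> \<iota> \<tau> = (\<lambda>w. \<Sum>qs \<in> {qs. is_run Q \<sigma> w qs}. run_weight \<sigma> \<iota> \<tau> w qs)"

definition reversible :: "nat set \<Rightarrow> (nat \<Rightarrow> 'a \<Rightarrow> nat \<Rightarrow> 'w::zero) \<Rightarrow> bool" where
  "reversible Q \<sigma> \<longleftrightarrow>
     (\<forall>p\<in>Q. \<forall>q\<in>Q. \<forall>q'\<in>Q. \<forall>a. \<sigma> p a q \<noteq> 0 \<and> \<sigma> p a q' \<noteq> 0 \<longrightarrow> q = q') \<and>
     (\<forall>p\<in>Q. \<forall>p'\<in>Q. \<forall>q\<in>Q. \<forall>a. \<sigma> p a q \<noteq> 0 \<and> \<sigma> p' a q \<noteq> 0 \<longrightarrow> p = p')"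

text \<open>Rev(S, Sigma): the semiring S is given by the type 'w, the alphabet by the type 'a.\<close>
definition Rev :: "('a, 'w::semiring_1) series set" where
  "Rev = {r. \<exists>Q \<sigma> \<iota> \<tau>. finite Q \<and> reversible Q \<sigma> \<and> r = behaviour Q \<sigma> \<iota> \<tau>}"

definition RevL :: "('a, 'w::semiring_1) series set \<Rightarrow> 'a list set set" where
  "RevL R = supp ` R"

end

theory Submission imports Defs "HOL-Library.Nat_Bijection" begin

lemma run_det:
  assumes rev: "reversible Q \<sigma>" and r1: "is_run Q \<sigma> w qs" and r2: "is_run Q \<sigma> w qs'"
    and h: "qs!0 = qs'!0"
  shows "qs = qs'"
proof -
  have "\<forall>k. k \<le> length w \<longrightarrow> qs!k = qs'!k"
  proof
    fix k show "k \<le> length w \<longrightarrow> qs!k = qs'!k"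
    proof (induction k)
      case 0 then show ?case using h by simp
    next
      case (Suc k)
      show ?case
      proof
        assume k: "Suc k \<le> length w"
        then have e: "qs!k = qs'!k" using Suc by simp
        have a: "\<sigma> (qs!k) (w!k) (qs!Suc k) \<noteq> 0" "\<sigma> (qs'!k) (w!k) (qs'!Suc k) \<noteq> 0"
          using r1 r2 k unfolding is_run_def by auto
        have "qs!k \<in> Q" "qs!Suc k \<in> Q" "qs'!Suc k \<in> Q"
          using r1 r2 k unfolding is_run_def by (auto intro!: nth_mem[THEN subsetD[rotated]])
        then show "qs!Suc k = qs'!Suc k" using rev a e unfolding reversible_def by metis
      qed
    qed
  qed
  then show ?thesis using r1 r2 unfolding is_run_def by (auto intro: nth_equalityI)
qed

lemma prod_list_ones: "(\<forall>x\<in>set xs. f x = 1) \<Longrightarrow> prod_list (map f xs) = (1::'w::monoid_mult)"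
  by (induction xs) auto

lemma behaviour_01:
  fixes \<sigma> :: "nat \<Rightarrow> 'a \<Rightarrow> nat \<Rightarrow> 'w::semiring_1"
  assumes "\<And>p a q. \<sigma> p a q \<noteq> 0 \<Longrightarrow> \<sigma> p a q = 1"
  shows "behaviour Q \<sigma> \<iota> \<tau> w = (\<Sum>qs\<in>{qs. is_run Q \<sigma> w qs}. \<iota> (qs!0) * \<tau> (qs!length w))"
  unfolding behaviour_def
proof (rule sum.cong)
  fix qs assume "qs \<in> {qs. is_run Q \<sigma> w qs}"
  then have "prod_list (map (\<lambda>k. \<sigma> (qs ! k) (w ! k) (qs ! Suc k)) [0..<length w]) = 1"
    by (intro prod_list_ones) (auto simp: is_run_def assms)
  then show "run_weight \<sigma> \<iota> \<tau> w qs = \<iota> (qs!0) * \<tau> (qs!length w)"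
    unfolding run_weight_def by simp
qed simp

lemma pow_sum: "finite K \<Longrightarrow> (\<Sum>S\<in>Pow K. (-2::'r::ring_1)^card S) = (-1)^card K"
proof (induction K rule: finite_induct)
  case empty then show ?case by simp
next
  case (insert x K)
  have d: "Pow K \<inter> insert x ` Pow K = {}" using insert by auto
  have i: "inj_on (insert x) (Pow K)" using insert by (auto simp: inj_on_def)
  have "(\<Sum>S\<in>Pow (insert x K). (-2::'r)^card S) = (\<Sum>S\<in>Pow K. (-2::'r)^card S) + (\<Sum>S\<in>insert x ` Pow K. (-2::'r)^card S)"
    unfolding Pow_insert using insert d by (intro sum.union_disjoint) auto
  also have "(\<Sum>S\<in>insert x ` Pow K. (-2::'r)^card S) = (\<Sum>S\<in>Pow K. (-2::'r)^Suc (card S))"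
    using i insert by (subst sum.reindex) (auto intro!: sum.cong simp: finite_subset card_insert_if)
  also have "\<dots> = (-2) * (\<Sum>S\<in>Pow K. (-2::'r)^card S)" by (simp add: sum_distrib_left)
  finally show ?case using insert by (simp add: algebra_simps mult_2)
qed

lemma parity_sum: "finite K \<Longrightarrow> (\<Sum>S\<in>{S\<in>Pow K. S \<noteq> {}}. (-2::'r::ring_1)^(card S - 1)) = (if odd (card K) then 1 else 0)"
proof (induction K rule: finite_induct)
  case empty then show ?case by simp
next
  case (insert x K)
  have d: "{S\<in>Pow K. S \<noteq> {}} \<inter> insert x ` Pow K = {}" using insert by auto
  have i: "inj_on (insert x) (Pow K)" using insert by (auto simp: inj_on_def)
  have e: "{S\<in>Pow (insert x K). S \<noteq> {}} = {S\<in>Pow K. S \<noteq> {}} \<union> insert x ` Pow K"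
    unfolding Pow_insert by auto
  have "(\<Sum>S\<in>{S\<in>Pow (insert x K). S \<noteq> {}}. (-2::'r)^(card S - 1)) = (\<Sum>S\<in>{S\<in>Pow K. S \<noteq> {}}. (-2::'r)^(card S - 1)) + (\<Sum>S\<in>insert x ` Pow K. (-2::'r)^(card S - 1))"
    unfolding e using insert d by (intro sum.union_disjoint) auto
  also have "(\<Sum>S\<in>insert x ` Pow K. (-2::'r)^(card S - 1)) = (\<Sum>S\<in>Pow K. (-2::'r)^(card S))"
    using i insert by (subst sum.reindex) (auto intro!: sum.cong simp: finite_subset card_insert_if)
  also have "\<dots> = (-1)^card K" using pow_sum insert by blast
  finally show ?case using insert by simp
qed

lemma bit_of_nat: "(of_nat n :: bit) = (if odd n then 1 else 0)"
  by (induction n) auto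

definition stepset :: "nat set \<Rightarrow> (nat \<Rightarrow> 'a \<Rightarrow> nat \<Rightarrow> 'w::zero) \<Rightarrow> 'a \<Rightarrow> nat set \<Rightarrow> nat set" where
  "stepset Q \<sigma> a T = {q\<in>Q. \<exists>p\<in>T. \<sigma> p a q \<noteq> 0}"
definition okstep :: "nat set \<Rightarrow> (nat \<Rightarrow> 'a \<Rightarrow> nat \<Rightarrow> 'w::zero) \<Rightarrow> 'a \<Rightarrow> nat set \<Rightarrow> bool" where
  "okstep Q \<sigma> a T = (\<forall>p\<in>T. \<exists>q\<in>Q. \<sigma> p a q \<noteq> 0)"
definition subQ :: "nat set \<Rightarrow> nat set" where
  "subQ Q = set_encode ` {T. T \<subseteq> Q \<and> T \<noteq> {}}"
definition subs :: "nat set \<Rightarrow> (nat \<Rightarrow> 'a \<Rightarrow> nat \<Rightarrow> 'w::zero) \<Rightarrow> nat \<Rightarrow> 'a \<Rightarrow> nat \<Rightarrow> 'r::ring_1" where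
  "subs Q \<sigma> m a n = (if m \<in> subQ Q \<and> n \<in> subQ Q \<and> okstep Q \<sigma> a (set_decode m)
      \<and> set_decode n = stepset Q \<sigma> a (set_decode m) then 1 else 0)"
definition subi :: "(nat \<Rightarrow> 'w::zero) \<Rightarrow> nat \<Rightarrow> 'r::ring_1" where
  "subi \<iota> m = (if \<forall>p\<in>set_decode m. \<iota> p \<noteq> 0 then (-2)^(card (set_decode m) - 1) else 0)"
definition subt :: "(nat \<Rightarrow> 'w::zero) \<Rightarrow> nat \<Rightarrow> 'r::ring_1" where
  "subt \<tau> m = (if \<forall>p\<in>set_decode m. \<tau> p \<noteq> 0 then 1 else 0)"

lemma subQ_decode: "finite Q \<Longrightarrow> m \<in> subQ Q \<Longrightarrow> set_decode m \<subseteq> Q \<and> set_decode m \<noteq> {}"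
  unfolding subQ_def by (auto simp: finite_subset)

lemma subs_nz: "(subs Q \<sigma> m a n :: 'r::ring_1) \<noteq> 0 \<longleftrightarrow> m \<in> subQ Q \<and> n \<in> subQ Q \<and> okstep Q \<sigma> a (set_decode m)
      \<and> set_decode n = stepset Q \<sigma> a (set_decode m)"
  unfolding subs_def by auto

lemma subs_rev:
  assumes fin: "finite Q" and rev: "reversible Q \<sigma>"
  shows "reversible (subQ Q) (subs Q \<sigma> :: nat \<Rightarrow> 'a \<Rightarrow> nat \<Rightarrow> 'r::ring_1)"
  unfolding reversible_def
proof (intro conjI ballI allI impI)
  fix p q q' a assume "(subs Q \<sigma> p a q :: 'r) \<noteq> 0 \<and> (subs Q \<sigma> p a q' :: 'r) \<noteq> 0"
  then have "set_decode q = set_decode q'" unfolding subs_nz by auto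
  then show "q = q'" by (metis set_decode_inverse)
next
  fix p p' q a assume "(subs Q \<sigma> p a q :: 'r) \<noteq> 0 \<and> (subs Q \<sigma> p' a q :: 'r) \<noteq> 0"
  then have h: "p \<in> subQ Q" "p' \<in> subQ Q" "okstep Q \<sigma> a (set_decode p)" "okstep Q \<sigma> a (set_decode p')"
    "stepset Q \<sigma> a (set_decode p) = stepset Q \<sigma> a (set_decode p')" unfolding subs_nz by auto
  have Qs: "set_decode p \<subseteq> Q" "set_decode p' \<subseteq> Q" using h subQ_decode fin by auto
  have "set_decode p \<subseteq> set_decode p'" if o1: "okstep Q \<sigma> a (set_decode p)" and o2:
     "stepset Q \<sigma> a (set_decode p) = stepset Q \<sigma> a (set_decode p')" and o3: "set_decode p \<subseteq> Q" "set_decode p' \<subseteq> Q"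
     for p p'
  proof
    fix x assume x: "x \<in> set_decode p"
    obtain y where y: "y \<in> Q" "\<sigma> x a y \<noteq> 0" using o1 x unfolding okstep_def by blast
    then have "y \<in> stepset Q \<sigma> a (set_decode p')" using o2 x unfolding stepset_def by auto
    then obtain x' where "x' \<in> set_decode p'" "\<sigma> x' a y \<noteq> 0" unfolding stepset_def by auto
    then show "x \<in> set_decode p'" using rev y x o3 unfolding reversible_def by blast
  qed
  then have "set_decode p = set_decode p'" using h Qs by (metis subset_antisym)
  then show "p = p'" by (metis set_decode_inverse)
qed

lemma fact2:
  fixes \<sigma> :: "nat \<Rightarrow> 'a \<Rightarrow> nat \<Rightarrow> 'w::zero" and \<iota> \<tau> :: "nat \<Rightarrow> 'w"
  assumes fin: "finite Q" and rev: "reversible Q \<sigma>"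
  shows "(behaviour (subQ Q) (subs Q \<sigma>) (subi \<iota>) (subt \<tau>) w :: 'r::ring_1)
    = (if odd (card {qs. is_run Q \<sigma> w qs \<and> \<iota> (qs!0) \<noteq> 0 \<and> \<tau> (qs!length w) \<noteq> 0}) then 1 else 0)"
proof -
  define R where "R = {qs. is_run Q \<sigma> w qs}"
  define K where "K = {qs. is_run Q \<sigma> w qs \<and> \<iota> (qs!0) \<noteq> 0 \<and> \<tau> (qs!length w) \<noteq> 0}"
  define R' where "R' = {qs. is_run (subQ Q) (subs Q \<sigma> :: nat \<Rightarrow> 'a \<Rightarrow> nat \<Rightarrow> 'r) w qs}"
  define Rs where "Rs = (\<lambda>S. map (\<lambda>k. set_encode ((\<lambda>qs. qs!k) ` S)) [0..<Suc (length w)])"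
  define A where "A = {S. S \<subseteq> R \<and> S \<noteq> {}}"
  have rev': "reversible (subQ Q) (subs Q \<sigma> :: nat \<Rightarrow> 'a \<Rightarrow> nat \<Rightarrow> 'r)" using subs_rev fin rev by blast
  have finR: "finite R"
    by (rule finite_subset[OF _ finite_lists_length_eq[OF fin, of "Suc (length w)"]]) (auto simp: R_def is_run_def)
  have inj0: "inj_on (\<lambda>qs. qs!0) R" using run_det[OF rev] unfolding R_def inj_on_def by blast
  have KR: "K \<subseteq> R" unfolding K_def R_def by auto
  have runA: "Rs S \<in> R'" if S: "S \<in> A" for S
  proof -
    define X where "X = (\<lambda>k. (\<lambda>qs. qs!k) ` S)"
    have finS: "finite S" using S finR unfolding A_def by (auto intro: finite_subset)
    have XQ: "X k \<subseteq> Q" "X k \<noteq> {}" "finite (X k)" if "k \<le> length w" for k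
      using S that finS unfolding X_def A_def R_def is_run_def
      by (auto intro!: nth_mem[THEN subsetD[rotated]])
    have XQ': "set_encode (X k) \<in> subQ Q" if "k \<le> length w" for k
      using XQ[OF that] unfolding subQ_def by auto
    have step: "(subs Q \<sigma> (set_encode (X k)) (w!k) (set_encode (X (Suc k))) :: 'r) \<noteq> 0" if k: "k < length w" for k
    proof -
      have ok: "okstep Q \<sigma> (w!k) (X k)"
        unfolding okstep_def X_def
      proof
        fix p assume "p \<in> (\<lambda>qs. qs!k) ` S"
        then obtain qs where qs: "qs \<in> S" "p = qs!k" by auto
        then have "is_run Q \<sigma> w qs" using S unfolding A_def R_def by auto
        then show "\<exists>q\<in>Q. \<sigma> p (w ! k) q \<noteq> 0" using qs k unfolding is_run_def
          by (auto intro!: bexI[of _ "qs!Suc k"] nth_mem[THEN subsetD[rotated]])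
      qed
      have st: "X (Suc k) = stepset Q \<sigma> (w!k) (X k)"
      proof
        show "X (Suc k) \<subseteq> stepset Q \<sigma> (w!k) (X k)"
        proof
          fix q assume "q \<in> X (Suc k)"
          then obtain qs where qs: "qs \<in> S" "q = qs!Suc k" unfolding X_def by auto
          then have "is_run Q \<sigma> w qs" using S unfolding A_def R_def by auto
          then show "q \<in> stepset Q \<sigma> (w!k) (X k)" using qs k unfolding is_run_def stepset_def X_def
            by (auto intro!: nth_mem[THEN subsetD[rotated]])
        qed
      next
        show "stepset Q \<sigma> (w!k) (X k) \<subseteq> X (Suc k)"
        proof
          fix q assume "q \<in> stepset Q \<sigma> (w!k) (X k)"
          then obtain qs where qs: "qs \<in> S" "\<sigma> (qs!k) (w!k) q \<noteq> 0" "q \<in> Q"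
            unfolding stepset_def X_def by auto
          then have r: "is_run Q \<sigma> w qs" using S unfolding A_def R_def by auto
          then have "\<sigma> (qs!k) (w!k) (qs!Suc k) \<noteq> 0" "qs!k \<in> Q" "qs!Suc k \<in> Q" using k unfolding is_run_def
            by (auto intro!: nth_mem[THEN subsetD[rotated]])
          then have "q = qs!Suc k" using qs rev unfolding reversible_def by blast
          then show "q \<in> X (Suc k)" using qs unfolding X_def by auto
        qed
      qed
      have d1: "set_decode (set_encode (X (Suc k))) = stepset Q \<sigma> (w!k) (X k)" using st XQ(3)[of "Suc k"] k by simp
      have d0: "set_decode (set_encode (X k)) = X k" using XQ(3)[of k] k by simp
      show ?thesis unfolding subs_nz d0 d1 using XQ'[of k] XQ'[of "Suc k"] k ok by simp
    qed
    have nth: "Rs S ! k = set_encode (X k)" if "k \<le> length w" for k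
      unfolding Rs_def X_def using that by (simp del: upt_Suc)
    have "is_run (subQ Q) (subs Q \<sigma> :: nat \<Rightarrow> 'a \<Rightarrow> nat \<Rightarrow> 'r) w (Rs S)"
      unfolding is_run_def
    proof (intro conjI allI impI)
      show "length (Rs S) = Suc (length w)" unfolding Rs_def by simp
      show "set (Rs S) \<subseteq> subQ Q" unfolding Rs_def using XQ' unfolding X_def by (auto simp del: upt_Suc)
      fix k assume "k < length w"
      then show "(subs Q \<sigma> (Rs S ! k) (w ! k) (Rs S ! Suc k) :: 'r) \<noteq> 0" using step nth by simp
    qed
    then show ?thesis unfolding R'_def by simp
  qed
  have runB: "\<exists>S\<in>A. qs' = Rs S" if q': "qs' \<in> R'" for qs'
  proof -
    have r': "is_run (subQ Q) (subs Q \<sigma> :: nat \<Rightarrow> 'a \<Rightarrow> nat \<Rightarrow> 'r) w qs'" using q' unfolding R'_def by simp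
    have inQ': "qs'!k \<in> subQ Q" if "k \<le> length w" for k
      using r' that unfolding is_run_def by (auto intro!: nth_mem[THEN subsetD[rotated]])
    have DQ: "set_decode (qs'!k) \<subseteq> Q" "set_decode (qs'!k) \<noteq> {}" if "k \<le> length w" for k
      using subQ_decode[OF fin inQ'[OF that]] by auto
    have stp: "okstep Q \<sigma> (w!k) (set_decode (qs'!k)) \<and> set_decode (qs'!Suc k) = stepset Q \<sigma> (w!k) (set_decode (qs'!k))"
      if "k < length w" for k
      using r' that unfolding is_run_def subs_nz by auto
    have ext: "\<forall>k. k \<le> length w \<longrightarrow> (\<exists>qs. length qs = Suc k \<and> qs!0 = p \<and> set qs \<subseteq> Q \<and>
        (\<forall>j<k. \<sigma> (qs!j) (w!j) (qs!Suc j) \<noteq> 0) \<and> qs!k \<in> set_decode (qs'!k))"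
      if p: "p \<in> set_decode (qs'!0)" for p
    proof
      fix k show "k \<le> length w \<longrightarrow> (\<exists>qs. length qs = Suc k \<and> qs!0 = p \<and> set qs \<subseteq> Q \<and>
        (\<forall>j<k. \<sigma> (qs!j) (w!j) (qs!Suc j) \<noteq> 0) \<and> qs!k \<in> set_decode (qs'!k))"
      proof (induction k)
        case 0 show ?case using p DQ[of 0] by (auto intro!: exI[of _ "[p]"])
      next
        case (Suc k)
        show ?case
        proof
          assume k: "Suc k \<le> length w"
          then obtain qs where qs: "length qs = Suc k" "qs!0 = p" "set qs \<subseteq> Q"
            "\<forall>j<k. \<sigma> (qs!j) (w!j) (qs!Suc j) \<noteq> 0" "qs!k \<in> set_decode (qs'!k)" using Suc by auto
          obtain q where q: "q \<in> Q" "\<sigma> (qs!k) (w!k) q \<noteq> 0" using stp[of k] k qs(5) unfolding okstep_def by auto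
          have qd: "q \<in> set_decode (qs'!Suc k)" using stp[of k] k q qs(5) unfolding stepset_def by auto
          show "\<exists>qs. length qs = Suc (Suc k) \<and> qs!0 = p \<and> set qs \<subseteq> Q \<and>
            (\<forall>j<Suc k. \<sigma> (qs!j) (w!j) (qs!Suc j) \<noteq> 0) \<and> qs!Suc k \<in> set_decode (qs'!Suc k)"
          proof (intro exI[of _ "qs @ [q]"] conjI allI impI)
            fix j assume j: "j < Suc k"
            show "\<sigma> ((qs @ [q]) ! j) (w ! j) ((qs @ [q]) ! Suc j) \<noteq> 0"
            proof (cases "j < k")
              case True then show ?thesis using qs by (simp add: nth_append)
            next
              case False then have "j = k" using j by simp
              then show ?thesis using qs q by (simp add: nth_append)
            qed
          qed (use qs q qd in \<open>auto simp: nth_append\<close>)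
        qed
      qed
    qed
    define S where "S = {qs\<in>R. qs!0 \<in> set_decode (qs'!0)}"
    have h0: "(\<lambda>qs. qs!0) ` S = set_decode (qs'!0)"
    proof
      show "(\<lambda>qs. qs!0) ` S \<subseteq> set_decode (qs'!0)" unfolding S_def by auto
      show "set_decode (qs'!0) \<subseteq> (\<lambda>qs. qs!0) ` S"
      proof
        fix p assume p: "p \<in> set_decode (qs'!0)"
        then obtain qs where "length qs = Suc (length w)" "qs!0 = p" "set qs \<subseteq> Q"
          "\<forall>j<length w. \<sigma> (qs!j) (w!j) (qs!Suc j) \<noteq> 0" using ext[OF p] by blast
        then have "qs \<in> S" using p unfolding S_def R_def is_run_def by auto
        then show "p \<in> (\<lambda>qs. qs!0) ` S" using \<open>qs!0 = p\<close> by force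
      qed
    qed
    have SA: "S \<in> A" using h0 DQ[of 0] unfolding A_def S_def by auto
    have "Rs S ! 0 = qs'!0" unfolding Rs_def using h0 by (simp del: upt_Suc)
    then have "Rs S = qs'" using run_det[OF rev'] runA[OF SA] r' unfolding R'_def by blast
    then show ?thesis using SA by blast
  qed
  have injRs: "inj_on Rs A"
  proof
    fix S1 S2 assume S: "S1 \<in> A" "S2 \<in> A" "Rs S1 = Rs S2"
    then have "Rs S1 ! 0 = Rs S2 ! 0" by simp
    then have "set_encode ((\<lambda>qs. qs!0) ` S1) = set_encode ((\<lambda>qs. qs!0) ` S2)"
      unfolding Rs_def by (simp del: upt_Suc)
    moreover have "finite S1" "finite S2" using S finR unfolding A_def by (auto intro: finite_subset)
    ultimately have "(\<lambda>qs. qs!0) ` S1 = (\<lambda>qs. qs!0) ` S2" by (simp add: set_encode_eq)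
    then show "S1 = S2" using inj_on_image_eq_iff[OF inj0] S unfolding A_def by blast
  qed
  have imRs: "Rs ` A = R'" using runA runB by blast
  have "(behaviour (subQ Q) (subs Q \<sigma>) (subi \<iota>) (subt \<tau>) w :: 'r)
      = (\<Sum>qs\<in>R'. subi \<iota> (qs!0) * subt \<tau> (qs!length w))"
    unfolding R'_def by (rule behaviour_01) (simp add: subs_def split: if_splits)
  also have "\<dots> = (\<Sum>S\<in>A. subi \<iota> (Rs S!0) * subt \<tau> (Rs S!length w))"
    unfolding imRs[symmetric] using injRs by (simp add: sum.reindex)
  also have "\<dots> = (\<Sum>S\<in>A. if S \<subseteq> K then (-2::'r)^(card S - 1) else 0)"
  proof (rule sum.cong)
    fix S assume S: "S \<in> A"
    have finS: "finite S" using S finR unfolding A_def by (auto intro: finite_subset)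
    have c: "card ((\<lambda>qs. qs!0) ` S) = card S" using S inj0 unfolding A_def
      by (auto intro!: card_image inj_on_subset[OF inj0])
    have "S \<subseteq> K \<longleftrightarrow> (\<forall>qs\<in>S. \<iota> (qs!0) \<noteq> 0) \<and> (\<forall>qs\<in>S. \<tau> (qs!length w) \<noteq> 0)"
      using S unfolding A_def K_def R_def by auto
    then show "subi \<iota> (Rs S!0) * subt \<tau> (Rs S!length w) = (if S \<subseteq> K then (-2::'r)^(card S - 1) else 0)"
      unfolding Rs_def subi_def subt_def using finS c by (simp del: upt_Suc add: nth_append)
  qed simp
  also have "\<dots> = (\<Sum>S\<in>{S\<in>A. S \<subseteq> K}. (-2::'r)^(card S - 1))"
    using finR unfolding A_def by (intro sum.inter_filter[symmetric]) auto
  also have "{S\<in>A. S \<subseteq> K} = {S\<in>Pow K. S \<noteq> {}}" using KR unfolding A_def by auto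
  also have "(\<Sum>S\<in>{S\<in>Pow K. S \<noteq> {}}. (-2::'r)^(card S - 1)) = (if odd (card K) then 1 else 0)"
    using finR KR by (intro parity_sum) (auto intro: finite_subset)
  finally show ?thesis unfolding K_def .
qed

theorem lemma2:
  fixes L :: "'a::finite list set"
  assumes "L \<in> RevL (Rev :: ('a, bit) series set)"
  shows "(char_series L :: ('a, 'r::ring_1) series) \<in> Rev
       \<and> L \<in> RevL (Rev :: ('a, 'r) series set)"
proof -
  obtain Q and \<sigma> :: "nat \<Rightarrow> 'a \<Rightarrow> nat \<Rightarrow> bit" and \<iota> \<tau> where
    fin: "finite Q" and rev: "reversible Q \<sigma>" and L: "L = supp (behaviour Q \<sigma> \<iota> \<tau>)"
    using assms unfolding RevL_def Rev_def by blast
  define K where "K = (\<lambda>w. {qs. is_run Q \<sigma> w qs \<and> \<iota> (qs!0) \<noteq> 0 \<and> \<tau> (qs!length w) \<noteq> 0})"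
  have bw: "behaviour Q \<sigma> \<iota> \<tau> w = of_nat (card (K w))" for w
  proof -
    define R where "R = {qs. is_run Q \<sigma> w qs}"
    have finR: "finite R"
      by (rule finite_subset[OF _ finite_lists_length_eq[OF fin, of "Suc (length w)"]]) (auto simp: R_def is_run_def)
    have "behaviour Q \<sigma> \<iota> \<tau> w = (\<Sum>qs\<in>R. \<iota> (qs!0) * \<tau> (qs!length w))"
      unfolding R_def by (rule behaviour_01) simp
    also have "\<dots> = (\<Sum>qs\<in>R. if \<iota> (qs!0) \<noteq> 0 \<and> \<tau> (qs!length w) \<noteq> 0 then 1 else 0)"
      by (rule sum.cong) auto
    also have "\<dots> = (\<Sum>qs\<in>{qs\<in>R. \<iota> (qs!0) \<noteq> 0 \<and> \<tau> (qs!length w) \<noteq> 0}. 1)"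
      by (rule sum.inter_filter[symmetric, OF finR])
    also have "\<dots> = of_nat (card (K w))" unfolding K_def R_def by simp
    finally show ?thesis .
  qed
  have Lw: "w \<in> L \<longleftrightarrow> odd (card (K w))" for w
    unfolding L supp_def bw bit_of_nat by simp
  have "char_series L = (behaviour (subQ Q) (subs Q \<sigma>) (subi \<iota>) (subt \<tau>) :: ('a, 'r) series)"
    unfolding char_series_def fact2[OF fin rev] using Lw by (auto simp: K_def)
  moreover have "finite (subQ Q)" unfolding subQ_def using fin by simp
  ultimately have c: "(char_series L :: ('a, 'r) series) \<in> Rev"
    unfolding Rev_def using subs_rev[OF fin rev] by blast
  have "supp (char_series L :: ('a, 'r) series) = L" unfolding supp_def char_series_def by auto
  then have "L \<in> RevL (Rev :: ('a, 'r) series set)" using c unfolding RevL_def by (metis image_eqI)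
  then show ?thesis using c by blast
qed

end
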